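(* Let $(A_i,\omega_i)$, $i=1,2$, be commutative baric algebras over $K$ and let $I$ be a two-sided ideal of $A_1\bowtie A_2$ with $I\subseteq\operatorname{Ker}(\omega_1\bowtie\omega_2)$. Then $I_1=A_1$ if and only if $I=\operatorname{Ker}(\omega_1\bowtie\omega_2)$.
   Context: A baric algebra over a field $K$ is a pair $(A,\omega)$ where $A$ is a (not necessarily associative) $K$-algebra and $\omega:A\to K$ is a nonzero $K$-algebra homomorphism. For baric algebras $(A_1,\omega_1),(A_2,\omega_2)$, $A_1\bowtie A_2$ denotes the vector space $A_1\oplus A_2$ with product $(a_1,a_2)(b_1,b_2)=(a_1b_1+\omega_2(b_2)a_1,\ a_2b_2+\omega_1(b_1)a_2)$, and $\omega_1\bowtie\omega_2(a_1,a_2)=\omega_1(a_1)+\omega_2(a_2)$. For $I\subseteq A_1\bowtie A_2$, $I_1=\{a_1\in A_1:\exists a_2\in A_2,\ (a_1,a_2)\in I\}$. *)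

theory Defs
  imports Main "HOL.Vector_Spaces" "HOL-Library.Product_Plus"
begin

definition nonassoc_algebra ::
  "('k::field \<Rightarrow> 'v::ab_group_add \<Rightarrow> 'v) \<Rightarrow> ('v \<Rightarrow> 'v \<Rightarrow> 'v) \<Rightarrow> bool" where
  "nonassoc_algebra sc m \<longleftrightarrow>
     vector_space sc \<and>
     (\<forall>x y z. m (x + y) z = m x z + m y z) \<and>
     (\<forall>x y z. m x (y + z) = m x y + m x z) \<and>
     (\<forall>c x y. m (sc c x) y = sc c (m x y)) \<and>
     (\<forall>c x y. m x (sc c y) = sc c (m x y))"

definition commutative_alg :: "('v \<Rightarrow> 'v \<Rightarrow> 'v) \<Rightarrow> bool" where
  "commutative_alg m \<longleftrightarrow> (\<forall>x y. m x y = m y x)"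

definition baric_algebra ::
  "('k::field \<Rightarrow> 'v::ab_group_add \<Rightarrow> 'v) \<Rightarrow> ('v \<Rightarrow> 'v \<Rightarrow> 'v) \<Rightarrow> ('v \<Rightarrow> 'k) \<Rightarrow> bool" where
  "baric_algebra sc m \<omega> \<longleftrightarrow>
     nonassoc_algebra sc m \<and>
     (\<forall>x y. \<omega> (x + y) = \<omega> x + \<omega> y) \<and>
     (\<forall>c x. \<omega> (sc c x) = c * \<omega> x) \<and>
     (\<forall>x y. \<omega> (m x y) = \<omega> x * \<omega> y) \<and>
     (\<exists>x. \<omega> x \<noteq> 0)"

definition two_sided_ideal ::
  "('k::field \<Rightarrow> 'v::ab_group_add \<Rightarrow> 'v) \<Rightarrow> ('v \<Rightarrow> 'v \<Rightarrow> 'v) \<Rightarrow> 'v set \<Rightarrow> bool" where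
  "two_sided_ideal sc m I \<longleftrightarrow>
     0 \<in> I \<and> (\<forall>x\<in>I. \<forall>y\<in>I. x + y \<in> I) \<and> (\<forall>c. \<forall>x\<in>I. sc c x \<in> I) \<and>
     (\<forall>x\<in>I. \<forall>a. m a x \<in> I \<and> m x a \<in> I)"

definition bowtie_scale ::
  "('k \<Rightarrow> 'a \<Rightarrow> 'a) \<Rightarrow> ('k \<Rightarrow> 'b \<Rightarrow> 'b) \<Rightarrow> 'k \<Rightarrow> 'a \<times> 'b \<Rightarrow> 'a \<times> 'b" where
  "bowtie_scale sc1 sc2 c p = (sc1 c (fst p), sc2 c (snd p))"

definition bowtie_mult ::
  "('k \<Rightarrow> 'a \<Rightarrow> 'a) \<Rightarrow> ('k \<Rightarrow> 'b \<Rightarrow> 'b) \<Rightarrow> ('a \<Rightarrow> 'a \<Rightarrow> 'a) \<Rightarrow> ('b \<Rightarrow> 'b \<Rightarrow> 'b)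
    \<Rightarrow> ('a \<Rightarrow> 'k) \<Rightarrow> ('b \<Rightarrow> 'k) \<Rightarrow> 'a \<times> 'b \<Rightarrow> 'a \<times> 'b \<Rightarrow> ('a::plus) \<times> ('b::plus)" where
  "bowtie_mult sc1 sc2 m1 m2 \<omega>1 \<omega>2 p q =
     (m1 (fst p) (fst q) + sc1 (\<omega>2 (snd q)) (fst p),
      m2 (snd p) (snd q) + sc2 (\<omega>1 (fst q)) (snd p))"

definition bowtie_weight :: "('a \<Rightarrow> 'k) \<Rightarrow> ('b \<Rightarrow> 'k) \<Rightarrow> 'a \<times> 'b \<Rightarrow> 'k::plus" where
  "bowtie_weight \<omega>1 \<omega>2 p = \<omega>1 (fst p) + \<omega>2 (snd p)"

text \<open>I_1 = first projection of I.\<close>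
definition proj1 :: "('a \<times> 'b) set \<Rightarrow> 'a set" where
  "proj1 I = {a1. \<exists>a2. (a1, a2) \<in> I}"

end

theory Submission
  imports Defs
begin

lemma na_facts:
  fixes sc :: "'k::field \<Rightarrow> 'v::ab_group_add \<Rightarrow> 'v"
  assumes "nonassoc_algebra sc m"
  shows "m x 0 = 0" "m 0 x = 0" "sc c 0 = 0" "sc (-1) x = - x" "sc 1 x = x" "sc 0 x = 0"
proof -
  have vs: "module sc" using assms unfolding nonassoc_algebra_def vector_space_def module_def by auto
  have "m x 0 = m x 0 + m x 0" using assms unfolding nonassoc_algebra_def
    by (metis add.right_neutral)
  thus "m x 0 = 0" by simp
  have "m 0 x = m 0 x + m 0 x" using assms unfolding nonassoc_algebra_def
    by (metis add.right_neutral)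
  thus "m 0 x = 0" by simp
  show "sc c 0 = 0" using vs by (rule module.scale_zero_right)
  show "sc (-1) x = - x" using vs by (simp add: module.scale_minus_left module.scale_one)
  show "sc 1 x = x" using vs by (simp add: module.scale_one)
  show "sc 0 x = 0" using vs by (simp add: module.scale_zero_left)
qed

lemma baric_facts:
  fixes sc :: "'k::field \<Rightarrow> 'v::ab_group_add \<Rightarrow> 'v"
  assumes "baric_algebra sc m \<omega>"
  shows "\<omega> 0 = 0" "\<omega> (- x) = - \<omega> x" "\<exists>x. \<omega> x = k"
proof -
  have na: "nonassoc_algebra sc m" using assms unfolding baric_algebra_def by blast
  have add: "\<And>x y. \<omega> (x + y) = \<omega> x + \<omega> y" using assms unfolding baric_algebra_def by blast
  have sc: "\<And>c x. \<omega> (sc c x) = c * \<omega> x" using assms unfolding baric_algebra_def by blast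
  have "\<omega> 0 = \<omega> 0 + \<omega> 0" using add[of 0 0] by simp
  thus "\<omega> 0 = 0" by (metis add_cancel_right_right)
  show "\<omega> (- x) = - \<omega> x" using sc[of "-1" x] na_facts(4)[OF na] by simp
  obtain e where e: "\<omega> e \<noteq> 0" using assms unfolding baric_algebra_def by blast
  have "\<omega> (sc (k / \<omega> e) e) = k" using sc e by simp
  thus "\<exists>x. \<omega> x = k" by blast
qed

theorem proposition5p3:
  fixes sc1 :: "'k::field \<Rightarrow> 'a::ab_group_add \<Rightarrow> 'a"
    and sc2 :: "'k \<Rightarrow> 'b::ab_group_add \<Rightarrow> 'b"
    and m1 :: "'a \<Rightarrow> 'a \<Rightarrow> 'a" and m2 :: "'b \<Rightarrow> 'b \<Rightarrow> 'b"
    and \<omega>1 :: "'a \<Rightarrow> 'k" and \<omega>2 :: "'b \<Rightarrow> 'k"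
    and I :: "('a \<times> 'b) set"
  assumes "baric_algebra sc1 m1 \<omega>1" and "commutative_alg m1"
    and "baric_algebra sc2 m2 \<omega>2" and "commutative_alg m2"
    and "two_sided_ideal (bowtie_scale sc1 sc2) (bowtie_mult sc1 sc2 m1 m2 \<omega>1 \<omega>2) I"
    and "I \<subseteq> {p. bowtie_weight \<omega>1 \<omega>2 p = 0}"
  shows "proj1 I = UNIV \<longleftrightarrow> I = {p. bowtie_weight \<omega>1 \<omega>2 p = 0}"
proof
  have na1: "nonassoc_algebra sc1 m1" and na2: "nonassoc_algebra sc2 m2"
    using assms(1,3) unfolding baric_algebra_def by blast+
  note B1 = baric_facts[OF assms(1)] and B2 = baric_facts[OF assms(3)]
  note N1 = na_facts[OF na1] and N2 = na_facts[OF na2]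
  have add1: "\<And>x y. \<omega>1 (x + y) = \<omega>1 x + \<omega>1 y" using assms(1) unfolding baric_algebra_def by blast
  have add2: "\<And>x y. \<omega>2 (x + y) = \<omega>2 x + \<omega>2 y" using assms(3) unfolding baric_algebra_def by blast
  have sc1w: "\<And>c x. \<omega>1 (sc1 c x) = c * \<omega>1 x" using assms(1) unfolding baric_algebra_def by blast
  have sc2w: "\<And>c x. \<omega>2 (sc2 c x) = c * \<omega>2 x" using assms(3) unfolding baric_algebra_def by blast
  have c1: "\<And>x y. m1 x y = m1 y x" using assms(2) unfolding commutative_alg_def by blast
  have c2: "\<And>x y. m2 x y = m2 y x" using assms(4) unfolding commutative_alg_def by blast
  have I0: "(0,0) \<in> I" using assms(5) unfolding two_sided_ideal_def by (simp add: zero_prod_def)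
  have Iadd: "\<And>x y. x \<in> I \<Longrightarrow> y \<in> I \<Longrightarrow> x + y \<in> I"
    using assms(5) unfolding two_sided_ideal_def by blast
  have Isc: "\<And>c x. x \<in> I \<Longrightarrow> bowtie_scale sc1 sc2 c x \<in> I"
    using assms(5) unfolding two_sided_ideal_def by blast
  have Ineg: "\<And>x. x \<in> I \<Longrightarrow> - x \<in> I"
  proof -
    fix x assume "x \<in> I"
    from Isc[OF this, of "-1"] show "- x \<in> I"
      by (simp add: bowtie_scale_def N1 N2 uminus_prod_def case_prod_beta)
  qed
  have Isub: "\<And>x y. x \<in> I \<Longrightarrow> y \<in> I \<Longrightarrow> x - y \<in> I"
    using Iadd Ineg by (metis diff_conv_add_uminus)
  have Iml: "\<And>x a. x \<in> I \<Longrightarrow> bowtie_mult sc1 sc2 m1 m2 \<omega>1 \<omega>2 a x \<in> I"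
    using assms(5) unfolding two_sided_ideal_def by blast
  have Imr: "\<And>x a. x \<in> I \<Longrightarrow> bowtie_mult sc1 sc2 m1 m2 \<omega>1 \<omega>2 x a \<in> I"
    using assms(5) unfolding two_sided_ideal_def by blast
  have kerI: "\<And>p. p \<in> I \<Longrightarrow> \<omega>1 (fst p) + \<omega>2 (snd p) = 0"
    using assms(6) unfolding bowtie_weight_def by blast
  show "proj1 I = UNIV \<Longrightarrow> I = {p. bowtie_weight \<omega>1 \<omega>2 p = 0}"
  proof -
    assume P: "proj1 I = UNIV"
    have ex: "\<And>x1. \<exists>x2. (x1, x2) \<in> I" using P unfolding proj1_def by blast
    obtain a1 where a1: "\<omega>1 a1 = 1" using B1(3) by blast
    obtain a2 where a2I: "(a1, a2) \<in> I" using ex by blast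
    have a2: "\<omega>2 a2 = -1" using kerI[OF a2I] a1 by (simp add: eq_neg_iff_add_eq_0 add.commute)
    have K1: "(c, 0) \<in> I" if "\<omega>1 c = 0" for c
    proof -
      obtain d where dI: "(c, d) \<in> I" using ex by blast
      have d: "\<omega>2 d = 0" using kerI[OF dI] that by simp
      have "bowtie_mult sc1 sc2 m1 m2 \<omega>1 \<omega>2 (a1, 0) (c, d) \<in> I" by (rule Iml[OF dI])
      hence e1: "(m1 a1 c, 0) \<in> I" by (simp add: bowtie_mult_def d N1 N2 that)
      have "bowtie_mult sc1 sc2 m1 m2 \<omega>1 \<omega>2 (c, 0) (a1, a2) \<in> I" by (rule Iml[OF a2I])
      hence e2: "(m1 c a1 - c, 0) \<in> I" by (simp add: bowtie_mult_def a1 a2 N1 N2)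
      have "(m1 a1 c, 0) - (m1 c a1 - c, 0) \<in> I" by (rule Isub[OF e1 e2])
      thus ?thesis by (simp add: c1[of a1 c])
    qed
    have K2: "(0, c) \<in> I" if "\<omega>2 c = 0" for c
    proof -
      have "bowtie_mult sc1 sc2 m1 m2 \<omega>1 \<omega>2 (a1, a2) (0, c) \<in> I" by (rule Imr[OF a2I])
      hence e1: "(0, m2 a2 c) \<in> I" by (simp add: bowtie_mult_def that N1 N2 B1(1))
      have "bowtie_mult sc1 sc2 m1 m2 \<omega>1 \<omega>2 (0, c) (a1, a2) \<in> I" by (rule Iml[OF a2I])
      hence e2: "(0, m2 c a2 + c) \<in> I" by (simp add: bowtie_mult_def a1 N1 N2)
      have "(0, m2 c a2 + c) - (0, m2 a2 c) \<in> I" by (rule Isub[OF e2 e1])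
      thus ?thesis by (simp add: c2[of a2 c])
    qed
    show ?thesis
    proof
      show "I \<subseteq> {p. bowtie_weight \<omega>1 \<omega>2 p = 0}" by (rule assms(6))
      show "{p. bowtie_weight \<omega>1 \<omega>2 p = 0} \<subseteq> I"
      proof
        fix p assume "p \<in> {p. bowtie_weight \<omega>1 \<omega>2 p = 0}"
        then obtain x1 x2 where p: "p = (x1, x2)" and w: "\<omega>1 x1 + \<omega>2 x2 = 0"
          unfolding bowtie_weight_def by (cases p) auto
        define k where "k = \<omega>1 x1"
        have t1: "bowtie_scale sc1 sc2 k (a1, a2) \<in> I" by (rule Isc[OF a2I])
        have w1: "\<omega>1 (x1 - sc1 k a1) = 0"
          using add1[of x1 "- sc1 k a1"] B1(2)[of "sc1 k a1"] sc1w a1 k_def by simp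
        have w2: "\<omega>2 (x2 - sc2 k a2) = 0"
          using add2[of x2 "- sc2 k a2"] B2(2)[of "sc2 k a2"] sc2w a2 k_def w
          by (simp add: eq_neg_iff_add_eq_0 add.commute)
        have "bowtie_scale sc1 sc2 k (a1, a2) + (x1 - sc1 k a1, 0) + (0, x2 - sc2 k a2) \<in> I"
          by (intro Iadd t1 K1 K2 w1 w2)
        thus "p \<in> I" by (simp add: bowtie_scale_def p)
      qed
    qed
  qed
  show "I = {p. bowtie_weight \<omega>1 \<omega>2 p = 0} \<Longrightarrow> proj1 I = UNIV"
  proof -
    assume E: "I = {p. bowtie_weight \<omega>1 \<omega>2 p = 0}"
    show ?thesis
    proof (rule set_eqI, simp add: proj1_def)
      fix x1
      obtain x2 where "\<omega>2 x2 = - \<omega>1 x1" using B2(3) by blast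
      hence "(x1, x2) \<in> I" by (simp add: E bowtie_weight_def)
      thus "\<exists>a2. (x1, a2) \<in> I" by blast
    qed
  qed
qed

end
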